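(* Let $N>1$ and $d\ge1$. Consider molecules with atom features $s\in\mathbb{R}^{N\times d}$ and coordinates $\vec r\in\mathbb{R}^{N\times3}$, with node identity features $\tilde s_j=\mathrm{Concatenate}(s_j,j)\in\mathbb{R}^{d+1}$, and local environments $\mathrm{LE}_i=\{(\tilde s_j,\vec r_{ij}): j\in\{1,\dots,N\}\}$. There exists a function $g$ mapping such local environments to $\mathbb{R}^{3\times 3}$ which is $\mathrm{O}(3)$-equivariant, i.e. $g(\{(\tilde s_j,\vec r_{ij}o^T)\}_j)=g(\{(\tilde s_j,\vec r_{ij})\}_j)o^T$ for all $o\in\mathrm{O}(3)$, such that for every molecule and every $i$, the matrix $\vec E_i=g(\mathrm{LE}_i)$, with $k=\mathrm{rank}(\vec E_i)$, has its first $k$ rows forming an orthonormal basis of $\mathrm{span}\{\vec r_{ij}: j=1,\dots,N\}$ and its remaining $3-k$ rows equal to zero.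
   Context: $\vec r_i\in\mathbb{R}^{1\times 3}$ is row $i$ of $\vec r$, $\vec r_{ij}=\vec r_i-\vec r_j$, and $\mathrm{O}(3)=\{Q\in\mathbb{R}^{3\times3}:QQ^T=I\}$. $s_j$ is row $j$ of $s$, and the identity feature of atom $j$ is the number $j$. *)

theory Defs
  imports "HOL-Analysis.Analysis"
begin

text \<open>Node identity feature: Concatenate(s_j, j) is represented as the pair (s_j, j),
  an element of (real^'d) \<times> real (canonically isomorphic to R^(d+1)).\<close>

definition ident_feat :: "(nat \<Rightarrow> real^'d) \<Rightarrow> nat \<Rightarrow> (real^'d) \<times> real" where
  "ident_feat s j = (s j, real j)"

definition local_env :: "nat \<Rightarrow> (nat \<Rightarrow> real^'d) \<Rightarrow> (nat \<Rightarrow> real^3) \<Rightarrow> nat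
    \<Rightarrow> (((real^'d) \<times> real) \<times> (real^3)) set" where
  "local_env N s r i = {(ident_feat s j, r i - r j) | j. j \<in> {1..N}}"

text \<open>Right action of Q^T on a row vector v: v Q^T, which is Q *v v in column convention.\<close>
definition act_env :: "real^3^3 \<Rightarrow> (((real^'d) \<times> real) \<times> (real^3)) set
    \<Rightarrow> (((real^'d) \<times> real) \<times> (real^3)) set" where
  "act_env Q L = (\<lambda>(f, v). (f, Q *v v)) ` L"

text \<open>The m-th row (0-based: m = 0,1,2) of a 3x3 matrix.\<close>
definition row3 :: "nat \<Rightarrow> real^3^3 \<Rightarrow> real^3" where
  "row3 m E = (if m = 0 then E $ 1 else if m = 1 then E $ 2 else E $ 3)"

end

theory Submission
  imports Defs
begin

definition proj :: "(real^3) list \<Rightarrow> real^3 \<Rightarrow> real^3" where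
  "proj B v = (\<Sum>a<length B. (v \<bullet> B!a) *\<^sub>R B!a)"

definition gstep :: "(real^3) list \<Rightarrow> real^3 \<Rightarrow> (real^3) list" where
  "gstep B v = (let w = v - proj B v in if w = 0 then B else B @ [(1 / norm w) *\<^sub>R w])"

fun gsa :: "(real^3) list \<Rightarrow> (real^3) list \<Rightarrow> (real^3) list" where
  "gsa B [] = B"
| "gsa B (v # vs) = gsa (gstep B v) vs"

definition orthn :: "(real^3) list \<Rightarrow> bool" where
  "orthn B \<longleftrightarrow> (\<forall>a<length B. \<forall>b<length B. B!a \<bullet> B!b = (if a = b then 1 else 0))"

lemma proj_equiv:
  assumes "orthogonal_transformation f"
  shows "proj (map f B) (f v) = f (proj B v)"
proof -
  have l: "linear f" using assms orthogonal_transformation_linear by blast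
  have i: "\<And>x y. f x \<bullet> f y = x \<bullet> y" using assms orthogonal_transformation_def by blast
  show ?thesis unfolding proj_def
    by (simp add: linear_sum[OF l] linear_scale[OF l] i)
qed

lemma gstep_equiv:
  assumes "orthogonal_transformation f"
  shows "gstep (map f B) (f v) = map f (gstep B v)"
proof -
  have l: "linear f" using assms orthogonal_transformation_linear by blast
  have n: "\<And>x. norm (f x) = norm x" using assms orthogonal_transformation_norm by blast
  have fw: "f v - f (proj B v) = f (v - proj B v)" by (simp add: linear_diff[OF l])
  have z: "\<And>x. f x = 0 \<longleftrightarrow> x = 0" by (metis n norm_eq_zero)
  show ?thesis unfolding gstep_def Let_def proj_equiv[OF assms] fw z
    by (simp add: n linear_scale[OF l])
qed

lemma gsa_equiv:
  assumes "orthogonal_transformation f"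
  shows "gsa (map f B) (map f vs) = map f (gsa B vs)"
  by (induction vs arbitrary: B) (simp_all add: gstep_equiv[OF assms])

lemma proj_span: "proj B v \<in> span (set B)"
  unfolding proj_def by (intro span_sum span_mul span_base) auto

lemma proj_inner:
  assumes "orthn B" "c < length B"
  shows "(v - proj B v) \<bullet> B!c = 0"
proof -
  have "proj B v \<bullet> B!c = (\<Sum>a<length B. (v \<bullet> B!a) * (B!a \<bullet> B!c))"
    unfolding proj_def by (simp add: inner_sum_left)
  also have "\<dots> = (\<Sum>a<length B. if a = c then v \<bullet> B!c else 0)"
    using assms unfolding orthn_def by (intro sum.cong) auto
  also have "\<dots> = v \<bullet> B!c" using assms(2) by simp
  finally show ?thesis by (simp add: inner_diff_left)
qed

lemma gstep_orthn:
  assumes "orthn B"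
  shows "orthn (gstep B v)"
proof (cases "v - proj B v = 0")
  case True then show ?thesis using assms by (simp add: gstep_def)
next
  case False
  define w where "w = v - proj B v"
  define u where "u = (1 / norm w) *\<^sub>R w"
  have w0: "w \<noteq> 0" using False w_def by simp
  have uu: "u \<bullet> u = 1" unfolding u_def using w0
    by (simp add: power2_norm_eq_inner[symmetric] power2_eq_square)
  have ub: "\<And>c. c < length B \<Longrightarrow> u \<bullet> B!c = 0"
    unfolding u_def w_def using proj_inner[OF assms] by simp
  have ub': "\<And>c. c < length B \<Longrightarrow> B!c \<bullet> u = 0"
    using ub by (simp add: inner_commute)
  have g: "gstep B v = B @ [u]" using False unfolding gstep_def Let_def u_def w_def by simp
  show ?thesis unfolding g orthn_def
  proof (intro allI impI)
    fix a b assume a: "a < length (B @ [u])" and b: "b < length (B @ [u])"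
    show "(B @ [u]) ! a \<bullet> (B @ [u]) ! b = (if a = b then 1 else 0)"
      using a b assms ub ub' uu unfolding orthn_def
      by (cases "a < length B"; cases "b < length B") (auto simp: nth_append)
  qed
qed

lemma gstep_span: "span (set (gstep B v)) = span (insert v (set B))"
proof (cases "v - proj B v = 0")
  case True
  then have "v \<in> span (set B)" using proj_span by (metis eq_iff_diff_eq_0)
  then show ?thesis using True by (simp add: gstep_def span_redundant)
next
  case False
  define w where "w = v - proj B v"
  define u where "u = (1 / norm w) *\<^sub>R w"
  have w0: "w \<noteq> 0" using False w_def by simp
  have g: "gstep B v = B @ [u]" using False unfolding gstep_def Let_def u_def w_def by simp
  have p1: "proj B v \<in> span (insert v (set B))" by (meson proj_span span_mono subset_insertI subsetD)
  have p2: "proj B v \<in> span (insert u (set B))" by (meson proj_span span_mono subset_insertI subsetD)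
  have "u \<in> span (insert v (set B))" unfolding u_def w_def
    by (intro span_mul span_diff p1 span_base) auto
  moreover have "v = norm w *\<^sub>R u + proj B v" unfolding u_def using w0 w_def by simp
  then have "v \<in> span (insert u (set B))"
    by (metis p2 span_add span_mul span_base insertI1)
  ultimately show ?thesis unfolding g
    by (simp add: span_eq) (meson span_superset subset_insertI subset_trans insert_subset)
qed

lemma span_Un_cong: "span A = span A' \<Longrightarrow> span (A \<union> C) = span (A' \<union> C)"
  by (simp add: span_Un)

lemma gsa_props:
  assumes "orthn B"
  shows "orthn (gsa B vs) \<and> span (set (gsa B vs)) = span (set B \<union> set vs)"
  using assms
proof (induction vs arbitrary: B)
  case Nil then show ?case by simp
next
  case (Cons v vs)
  have "orthn (gstep B v)" using gstep_orthn Cons.prems by blast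
  from Cons.IH[OF this] have h: "orthn (gsa (gstep B v) vs)"
    "span (set (gsa (gstep B v) vs)) = span (set (gstep B v) \<union> set vs)" by auto
  have "span (set (gstep B v) \<union> set vs) = span (insert v (set B) \<union> set vs)"
    by (rule span_Un_cong[OF gstep_span])
  then show ?case using h by simp
qed


lemma orthn_len:
  assumes "orthn B"
  shows "distinct B \<and> length B \<le> 3"
proof -
  have d: "distinct B" unfolding distinct_conv_nth
  proof (intro allI impI)
    fix a b assume "a < length B" "b < length B" "a \<noteq> b"
    then show "B!a \<noteq> B!b" using assms unfolding orthn_def
      by (metis zero_neq_one)
  qed
  have "pairwise orthogonal (set B)" unfolding pairwise_def orthogonal_def
    using assms unfolding orthn_def by (metis in_set_conv_nth)
  moreover have "0 \<notin> set B" using assms unfolding orthn_def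
    by (metis in_set_conv_nth inner_zero_left zero_neq_one)
  ultimately have "independent (set B)" by (rule pairwise_orthogonal_independent)
  then have "card (set B) \<le> DIM(real^3)" using independent_bound by blast
  then show ?thesis using d by (simp add: distinct_card)
qed

definition nth0 :: "(real^3) list \<Rightarrow> nat \<Rightarrow> real^3" where
  "nth0 B a = (if a < length B then B!a else 0)"

definition mkE :: "(real^3) list \<Rightarrow> real^3^3" where
  "mkE B = vector [nth0 B 0, nth0 B 1, nth0 B 2]"

lemma row3_mkE: "a < 3 \<Longrightarrow> row3 a (mkE B) = nth0 B a"
proof -
  assume "a < 3"
  then have "a = 0 \<or> a = 1 \<or> a = 2" by auto
  then show ?thesis by (elim disjE) (simp_all add: row3_def mkE_def)
qed

lemma rows_mkE: "rows (mkE B) = {nth0 B 0, nth0 B 1, nth0 B 2}"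
proof -
  have "rows (mkE B) = {mkE B $ i | i. True}" unfolding rows_def row_def by (simp add: vec_lambda_eta)
  also have "\<dots> = {mkE B $ 1, mkE B $ 2, mkE B $ 3}" by auto (metis exhaust_3)
  finally show ?thesis unfolding mkE_def by simp
qed

lemma rank_mkE:
  assumes "orthn B"
  shows "rank (mkE B) = length B"
proof -
  have l: "distinct B" "length B \<le> 3" using orthn_len[OF assms] by auto
  have s1: "rows (mkE B) \<subseteq> insert 0 (set B)" unfolding rows_mkE nth0_def by auto
  have s2: "set B \<subseteq> rows (mkE B)" unfolding rows_mkE nth0_def
  proof
    fix x assume "x \<in> set B"
    then obtain a where a: "a < length B" "x = B!a" by (metis in_set_conv_nth)
    then have "a = 0 \<or> a = 1 \<or> a = 2" using l by linarith
    then show "x \<in> {if 0 < length B then B ! 0 else 0, if 1 < length B then B ! 1 else 0,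
             if 2 < length B then B ! 2 else 0}" using a by auto
  qed
  have "span (rows (mkE B)) = span (set B)"
  proof -
    have "span (rows (mkE B)) \<subseteq> span (insert 0 (set B))" using s1 span_mono by blast
    also have "\<dots> = span (set B)" by (simp add: span_redundant span_zero)
    finally show ?thesis using s2 span_mono by blast
  qed
  then have "dim (rows (mkE B)) = dim (set B)" by (metis dim_span)
  moreover have "independent (set B)"
  proof -
    have "pairwise orthogonal (set B)" unfolding pairwise_def orthogonal_def
      using assms unfolding orthn_def by (metis in_set_conv_nth)
    moreover have "0 \<notin> set B" using assms unfolding orthn_def
      by (metis in_set_conv_nth inner_zero_left zero_neq_one)
    ultimately show ?thesis by (rule pairwise_orthogonal_independent)
  qed
  ultimately show ?thesis unfolding row_rank_def
    using dim_eq_card_independent l(1) distinct_card by metis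
qed

lemma mkE_equiv:
  fixes Q :: "real^3^3"
  shows "mkE (map (\<lambda>x. Q *v x) B) = mkE B ** transpose Q"
proof -
  have n: "\<And>a. nth0 (map (\<lambda>x. Q *v x) B) a = Q *v nth0 B a"
    unfolding nth0_def by simp
  have "\<And>i k. (mkE (map (\<lambda>x. Q *v x) B)) $ i $ k = (mkE B ** transpose Q) $ i $ k"
  proof -
    fix i k :: 3
    have "\<And>x. (Q *v x) $ k = (\<Sum>j\<in>UNIV. x $ j * Q $ k $ j)"
      by (simp add: matrix_vector_mult_def mult.commute)
    then show "(mkE (map (\<lambda>x. Q *v x) B)) $ i $ k = (mkE B ** transpose Q) $ i $ k"
      using exhaust_3[of i] unfolding mkE_def
      by (auto simp: n matrix_matrix_mult_def transpose_def)
  qed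
  then show ?thesis by (simp add: vec_eq_iff)
qed

definition vj :: "(((real^'d) \<times> real) \<times> (real^3)) set \<Rightarrow> nat \<Rightarrow> real^3" where
  "vj L j = (SOME v. \<exists>f. (f, v) \<in> L \<and> snd f = real j)"

lemma vj_local:
  assumes "j \<in> {1..N}"
  shows "vj (local_env N s r i) j = r i - r j"
  unfolding vj_def local_env_def ident_feat_def
  by (rule some_equality) (use assms in auto)

lemma vj_act:
  assumes "j \<in> {1..N}"
  shows "vj (act_env Q (local_env N s r i)) j = Q *v (r i - r j)"
  unfolding vj_def local_env_def ident_feat_def act_env_def
  by (rule some_equality) (use assms in force)+

definition gfun :: "nat \<Rightarrow> (((real^'d) \<times> real) \<times> (real^3)) set \<Rightarrow> real^3^3" where
  "gfun N L = mkE (gsa [] (map (vj L) [1..<N+1]))"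

theorem proposition6:
  fixes N :: nat
  assumes "N > 1"
  shows "\<exists>g :: (((real^'d) \<times> real) \<times> (real^3)) set \<Rightarrow> real^3^3.
     (\<forall>(s :: nat \<Rightarrow> real^'d) (r :: nat \<Rightarrow> real^3) i (Q :: real^3^3).
        i \<in> {1..N} \<longrightarrow> orthogonal_matrix Q \<longrightarrow>
        g (act_env Q (local_env N s r i)) = g (local_env N s r i) ** transpose Q) \<and>
     (\<forall>(s :: nat \<Rightarrow> real^'d) (r :: nat \<Rightarrow> real^3) i. i \<in> {1..N} \<longrightarrow>
        (let E = g (local_env N s r i); k = rank E in
           (\<forall>a<k. \<forall>b<k. row3 a E \<bullet> row3 b E = (if a = b then 1 else 0)) \<and>
           span {row3 a E | a. a < k} = span {r i - r j | j. j \<in> {1..N}} \<and>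
           (\<forall>a. k \<le> a \<and> a < 3 \<longrightarrow> row3 a E = 0)))"
proof (intro exI conjI allI impI)
  have o0: "orthn []" unfolding orthn_def by simp
  have ml: "\<And>(s :: nat \<Rightarrow> real^'d) r i. map (vj (local_env N s r i)) [1..<N+1] = map (\<lambda>j. r i - r j) [1..<N+1]"
    by (intro map_cong refl) (rule vj_local, auto)
  fix s :: "nat \<Rightarrow> real^'d" and r :: "nat \<Rightarrow> real^3" and i and Q :: "real^3^3"
  assume i: "i \<in> {1..N}" and Q: "orthogonal_matrix Q"
  have ot: "orthogonal_transformation (\<lambda>x. Q *v x)"
    using Q by (simp add: orthogonal_transformation_matrix matrix_vector_mul_linear)
  have "map (vj (act_env Q (local_env N s r i))) [1..<N+1] = map (\<lambda>x. Q *v x) (map (\<lambda>j. r i - r j) [1..<N+1])"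
    unfolding map_map by (intro map_cong refl) (simp add: o_def, rule vj_act, auto)
  note mq = this
  show "gfun N (act_env Q (local_env N s r i)) = gfun N (local_env N s r i) ** transpose Q"
    unfolding gfun_def ml mq gsa_equiv[OF ot, of "[]", simplified] mkE_equiv ..
next
  fix s :: "nat \<Rightarrow> real^'d" and r :: "nat \<Rightarrow> real^3" and i
  assume i: "i \<in> {1..N}"
  have ml: "map (vj (local_env N s r i)) [1..<N+1] = map (\<lambda>j. r i - r j) [1..<N+1]"
    by (intro map_cong refl) (rule vj_local, auto)
  define B where "B = gsa [] (map (\<lambda>j. r i - r j) [1..<N+1])"
  have o0: "orthn []" unfolding orthn_def by simp
  have oB: "orthn B" and sB: "span (set B) = span (set (map (\<lambda>j. r i - r j) [1..<N+1]))"
    using gsa_props[OF o0] unfolding B_def by auto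
  have lB: "length B \<le> 3" using orthn_len[OF oB] by simp
  have E: "gfun N (local_env N s r i) = mkE B" unfolding gfun_def ml B_def ..
  have rk: "rank (mkE B) = length B" by (rule rank_mkE[OF oB])
  have r3: "\<And>a. a < length B \<Longrightarrow> row3 a (mkE B) = B!a"
    using lB by (simp add: row3_mkE nth0_def)
  have "{row3 a (mkE B) | a. a < length B} = set B"
    using r3 by (auto simp: in_set_conv_nth) (metis r3)
  moreover have "set (map (\<lambda>j. r i - r j) [1..<N+1]) = {r i - r j | j. j \<in> {1..N}}"
    by auto
  ultimately show "let E = gfun N (local_env N s r i); k = rank E in
           (\<forall>a<k. \<forall>b<k. row3 a E \<bullet> row3 b E = (if a = b then 1 else 0)) \<and>
           span {row3 a E | a. a < k} = span {r i - r j | j. j \<in> {1..N}} \<and>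
           (\<forall>a. k \<le> a \<and> a < 3 \<longrightarrow> row3 a E = 0)"
    unfolding E Let_def rk using oB sB r3
    by (auto simp: orthn_def row3_mkE nth0_def)
qed

end
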